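(* Let $M$ be a $\pi$-projective right $R$-module. The following are equivalent: (a) $M$ is principally lifting; (b) $M$ is principally Goldie*-lifting; (c) $M$ is $\oplus$-principally supplemented.
   Context: $R$ is an associative ring with identity; modules are unital right $R$-modules. $M$ is $\pi$-projective if for all submodules $U,V$ with $U+V=M$ there exists $f\in\mathrm{End}(M)$ with $f(M)\subseteq U$ and $(1-f)(M)\subseteq V$. $K\ll N$ means $K$ is small in $N$. For submodules $X,Y$ of $M$, $X\,\beta^*\,Y$ means $(X+Y)/X\ll M/X$ and $(X+Y)/Y\ll M/Y$. $M$ is principally Goldie*-lifting if for every cyclic submodule $X$ there is a direct summand $D$ of $M$ with $X\,\beta^*\,D$. $M$ is principally lifting if for every cyclic submodule $X$ there is a decomposition $M=D\oplus D'$ with $D\subseteq X$ and $D'\cap X\ll M$. $M$ is $\oplus$-principally supplemented if for every cyclic submodule $X$ there is a direct summand $D$ of $M$ with $M=D+X$ and $D\cap X\ll D$. *)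

theory Defs
  imports "HOL-Algebra.Module"
begin

text \<open>Right modules over a (not necessarily commutative) ring R with identity.
  We reuse the record type of HOL-Algebra modules; the scalar action
  smult M r x is read as the RIGHT action x r.\<close>

definition right_module :: "('r, 'm) ring_scheme \<Rightarrow> ('r, 'a) module \<Rightarrow> bool" where
  "right_module R M \<longleftrightarrow> ring R \<and> abelian_group M \<and>
     (\<forall>r\<in>carrier R. \<forall>x\<in>carrier M. smult M r x \<in> carrier M) \<and>
     (\<forall>r\<in>carrier R. \<forall>x\<in>carrier M. \<forall>y\<in>carrier M.
         smult M r (x \<oplus>\<^bsub>M\<^esub> y) = smult M r x \<oplus>\<^bsub>M\<^esub> smult M r y) \<and>
     (\<forall>r\<in>carrier R. \<forall>s\<in>carrier R. \<forall>x\<in>carrier M.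
         smult M (r \<oplus>\<^bsub>R\<^esub> s) x = smult M r x \<oplus>\<^bsub>M\<^esub> smult M s x) \<and>
     (\<forall>r\<in>carrier R. \<forall>s\<in>carrier R. \<forall>x\<in>carrier M.
         smult M (r \<otimes>\<^bsub>R\<^esub> s) x = smult M s (smult M r x)) \<and>
     (\<forall>x\<in>carrier M. smult M \<one>\<^bsub>R\<^esub> x = x)"

definition submod :: "('r, 'm) ring_scheme \<Rightarrow> ('r, 'a) module \<Rightarrow> 'a set \<Rightarrow> bool" where
  "submod R M N \<longleftrightarrow> N \<subseteq> carrier M \<and> \<zero>\<^bsub>M\<^esub> \<in> N \<and>
     (\<forall>x\<in>N. \<forall>y\<in>N. x \<oplus>\<^bsub>M\<^esub> y \<in> N) \<and> (\<forall>x\<in>N. \<ominus>\<^bsub>M\<^esub> x \<in> N) \<and>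
     (\<forall>x\<in>N. \<forall>r\<in>carrier R. smult M r x \<in> N)"

definition msum :: "('r, 'a) module \<Rightarrow> 'a set \<Rightarrow> 'a set \<Rightarrow> 'a set" where
  "msum M X Y = {x \<oplus>\<^bsub>M\<^esub> y | x y. x \<in> X \<and> y \<in> Y}"

definition small_in :: "('r, 'm) ring_scheme \<Rightarrow> ('r, 'a) module \<Rightarrow> 'a set \<Rightarrow> 'a set \<Rightarrow> bool" where
  "small_in R M N K \<longleftrightarrow> submod R M K \<and> K \<subseteq> N \<and>
     (\<forall>L. submod R M L \<and> L \<subseteq> N \<and> msum M K L = N \<longrightarrow> L = N)"

definition cyclic_sub :: "('r, 'm) ring_scheme \<Rightarrow> ('r, 'a) module \<Rightarrow> 'a set \<Rightarrow> bool" where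
  "cyclic_sub R M X \<longleftrightarrow> (\<exists>m\<in>carrier M. X = {smult M r m | r. r \<in> carrier R})"

definition is_decomp :: "('r, 'm) ring_scheme \<Rightarrow> ('r, 'a) module \<Rightarrow> 'a set \<Rightarrow> 'a set \<Rightarrow> bool" where
  "is_decomp R M D D' \<longleftrightarrow> submod R M D \<and> submod R M D' \<and>
     msum M D D' = carrier M \<and> D \<inter> D' = {\<zero>\<^bsub>M\<^esub>}"

definition direct_summand :: "('r, 'm) ring_scheme \<Rightarrow> ('r, 'a) module \<Rightarrow> 'a set \<Rightarrow> bool" where
  "direct_summand R M D \<longleftrightarrow> (\<exists>D'. is_decomp R M D D')"

definition endo :: "('r, 'm) ring_scheme \<Rightarrow> ('r, 'a) module \<Rightarrow> ('a \<Rightarrow> 'a) \<Rightarrow> bool" where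
  "endo R M f \<longleftrightarrow> f \<in> carrier M \<rightarrow> carrier M \<and>
     (\<forall>x\<in>carrier M. \<forall>y\<in>carrier M. f (x \<oplus>\<^bsub>M\<^esub> y) = f x \<oplus>\<^bsub>M\<^esub> f y) \<and>
     (\<forall>r\<in>carrier R. \<forall>x\<in>carrier M. f (smult M r x) = smult M r (f x))"

definition pi_projective :: "('r, 'm) ring_scheme \<Rightarrow> ('r, 'a) module \<Rightarrow> bool" where
  "pi_projective R M \<longleftrightarrow> (\<forall>U V. submod R M U \<and> submod R M V \<and> msum M U V = carrier M \<longrightarrow>
     (\<exists>f. endo R M f \<and> f ` carrier M \<subseteq> U \<and> (\<forall>x\<in>carrier M. x \<ominus>\<^bsub>M\<^esub> f x \<in> V)))"

definition mcoset :: "('r, 'a) module \<Rightarrow> 'a set \<Rightarrow> 'a \<Rightarrow> 'a set" where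
  "mcoset M X x = {y \<oplus>\<^bsub>M\<^esub> x | y. y \<in> X}"

definition quot_mod :: "('r, 'a) module \<Rightarrow> 'a set \<Rightarrow> ('r, 'a set) module" where
  "quot_mod M X =
     \<lparr>carrier = mcoset M X ` carrier M,
      monoid.mult = (\<lambda>A B. undefined), one = undefined,
      zero = X,
      add = (\<lambda>A B. msum M A B),
      smult = (\<lambda>r A. msum M X ((\<lambda>a. smult M r a) ` A))\<rparr>"

definition quot_sub :: "('r, 'a) module \<Rightarrow> 'a set \<Rightarrow> 'a set \<Rightarrow> 'a set set" where
  "quot_sub M X K = mcoset M X ` K"

definition beta_star :: "('r, 'm) ring_scheme \<Rightarrow> ('r, 'a) module \<Rightarrow> 'a set \<Rightarrow> 'a set \<Rightarrow> bool" where
  "beta_star R M X Y \<longleftrightarrow>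
     small_in R (quot_mod M X) (carrier (quot_mod M X)) (quot_sub M X (msum M X Y)) \<and>
     small_in R (quot_mod M Y) (carrier (quot_mod M Y)) (quot_sub M Y (msum M X Y))"

definition principally_goldie_star_lifting :: "('r, 'm) ring_scheme \<Rightarrow> ('r, 'a) module \<Rightarrow> bool" where
  "principally_goldie_star_lifting R M \<longleftrightarrow>
     (\<forall>X. cyclic_sub R M X \<longrightarrow> (\<exists>D. direct_summand R M D \<and> beta_star R M X D))"

definition principally_lifting :: "('r, 'm) ring_scheme \<Rightarrow> ('r, 'a) module \<Rightarrow> bool" where
  "principally_lifting R M \<longleftrightarrow>
     (\<forall>X. cyclic_sub R M X \<longrightarrow>
        (\<exists>D D'. is_decomp R M D D' \<and> D \<subseteq> X \<and> small_in R M (carrier M) (D' \<inter> X)))"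

definition oplus_principally_supplemented :: "('r, 'm) ring_scheme \<Rightarrow> ('r, 'a) module \<Rightarrow> bool" where
  "oplus_principally_supplemented R M \<longleftrightarrow>
     (\<forall>X. cyclic_sub R M X \<longrightarrow>
        (\<exists>D. direct_summand R M D \<and> msum M D X = carrier M \<and> small_in R M D (D \<inter> X)))"

end

theory Submission
  imports Defs
begin



locale rmod =
  fixes R :: "('r, 'm) ring_scheme" and M :: "('r, 'a) module"
  assumes rm: "right_module R M"
begin

sublocale abelian_group M using rm unfolding right_module_def by blast

lemma ringR: "ring R" using rm unfolding right_module_def by blast

lemma sm_closed: "r \<in> carrier R \<Longrightarrow> x \<in> carrier M \<Longrightarrow> smult M r x \<in> carrier M"
  using rm unfolding right_module_def by blast
lemma sm_add: "r \<in> carrier R \<Longrightarrow> x \<in> carrier M \<Longrightarrow> y \<in> carrier M \<Longrightarrow>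
   smult M r (x \<oplus>\<^bsub>M\<^esub> y) = smult M r x \<oplus>\<^bsub>M\<^esub> smult M r y"
  using rm unfolding right_module_def by blast
lemma sm_radd: "r \<in> carrier R \<Longrightarrow> s \<in> carrier R \<Longrightarrow> x \<in> carrier M \<Longrightarrow>
   smult M (r \<oplus>\<^bsub>R\<^esub> s) x = smult M r x \<oplus>\<^bsub>M\<^esub> smult M s x"
  using rm unfolding right_module_def by blast
lemma sm_mult: "r \<in> carrier R \<Longrightarrow> s \<in> carrier R \<Longrightarrow> x \<in> carrier M \<Longrightarrow>
   smult M (r \<otimes>\<^bsub>R\<^esub> s) x = smult M s (smult M r x)"
  using rm unfolding right_module_def by blast

lemma sm_zero: "x \<in> carrier M \<Longrightarrow> smult M \<zero>\<^bsub>R\<^esub> x = \<zero>\<^bsub>M\<^esub>"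
proof -
  assume x: "x \<in> carrier M"
  interpret R: ring R by (rule ringR)
  have "smult M \<zero>\<^bsub>R\<^esub> x = smult M \<zero>\<^bsub>R\<^esub> x \<oplus>\<^bsub>M\<^esub> smult M \<zero>\<^bsub>R\<^esub> x"
    using sm_radd[of "\<zero>\<^bsub>R\<^esub>" "\<zero>\<^bsub>R\<^esub>" x] x by simp
  thus ?thesis using x sm_closed[of "\<zero>\<^bsub>R\<^esub>" x]
    by (metis R.zero_closed add.l_cancel_one' zero_closed)
qed

lemma submodD:
  assumes "submod R M N"
  shows "N \<subseteq> carrier M" "\<zero>\<^bsub>M\<^esub> \<in> N" "x \<in> N \<Longrightarrow> y \<in> N \<Longrightarrow> x \<oplus>\<^bsub>M\<^esub> y \<in> N"
    "x \<in> N \<Longrightarrow> \<ominus>\<^bsub>M\<^esub> x \<in> N" "x \<in> N \<Longrightarrow> r \<in> carrier R \<Longrightarrow> smult M r x \<in> N"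
  using assms unfolding submod_def by blast+

lemma submod_minus: "submod R M N \<Longrightarrow> x \<in> N \<Longrightarrow> y \<in> N \<Longrightarrow> x \<ominus>\<^bsub>M\<^esub> y \<in> N"
  by (simp add: minus_eq submodD)

lemma cyclic_submod: assumes "cyclic_sub R M X" shows "submod R M X"
proof -
  interpret R: ring R by (rule ringR)
  obtain m where m: "m \<in> carrier M" and X: "X = {smult M r m | r. r \<in> carrier R}"
    using assms unfolding cyclic_sub_def by blast
  show ?thesis unfolding submod_def X
  proof (intro conjI ballI allI impI)
    show "{smult M r m |r. r \<in> carrier R} \<subseteq> carrier M" using sm_closed m by blast
    show "\<zero>\<^bsub>M\<^esub> \<in> {smult M r m |r. r \<in> carrier R}"
      using sm_zero[OF m] R.zero_closed by (metis (mono_tags, lifting) mem_Collect_eq)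
  next
    fix x y assume "x \<in> {smult M r m |r. r \<in> carrier R}" "y \<in> {smult M r m |r. r \<in> carrier R}"
    then obtain r s where "r \<in> carrier R" "s \<in> carrier R" "x = smult M r m" "y = smult M s m" by blast
    thus "x \<oplus>\<^bsub>M\<^esub> y \<in> {smult M r m |r. r \<in> carrier R}"
      using sm_radd[of r s m] m by (metis (mono_tags, lifting) R.add.m_closed mem_Collect_eq)
  next
    fix x assume "x \<in> {smult M r m |r. r \<in> carrier R}"
    then obtain r where r: "r \<in> carrier R" "x = smult M r m" by blast
    have "smult M (\<ominus>\<^bsub>R\<^esub> r) m \<oplus>\<^bsub>M\<^esub> x = \<zero>\<^bsub>M\<^esub>"
      using sm_radd[of "\<ominus>\<^bsub>R\<^esub> r" r m] r m sm_zero[OF m] by (simp add: R.l_neg)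
    hence "\<ominus>\<^bsub>M\<^esub> x = smult M (\<ominus>\<^bsub>R\<^esub> r) m"
      using r m sm_closed by (metis R.a_inv_closed minus_equality)
    thus "\<ominus>\<^bsub>M\<^esub> x \<in> {smult M r m |r. r \<in> carrier R}" using r by blast
  next
    fix x r assume "x \<in> {smult M r m |r. r \<in> carrier R}" "r \<in> carrier R"
    then obtain s where s: "s \<in> carrier R" "x = smult M s m" by blast
    thus "smult M r x \<in> {smult M r m |r. r \<in> carrier R}"
      using sm_mult[of s r m] m \<open>r \<in> carrier R\<close> by (metis (mono_tags, lifting) R.m_closed mem_Collect_eq)
  qed
qed

lemma submod_Int: "submod R M A \<Longrightarrow> submod R M B \<Longrightarrow> submod R M (A \<inter> B)"
  unfolding submod_def by blast

end


context rmod begin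
lemma submod_msum: assumes A: "submod R M A" and B: "submod R M B" shows "submod R M (msum M A B)"
  unfolding submod_def msum_def
proof (intro conjI ballI allI impI)
  note a = submodD[OF A] and b = submodD[OF B]
  show "{x \<oplus>\<^bsub>M\<^esub> y |x y. x \<in> A \<and> y \<in> B} \<subseteq> carrier M" using a b by blast
  have "\<zero>\<^bsub>M\<^esub> = \<zero>\<^bsub>M\<^esub> \<oplus>\<^bsub>M\<^esub> \<zero>\<^bsub>M\<^esub>" by simp
  thus "\<zero>\<^bsub>M\<^esub> \<in> {x \<oplus>\<^bsub>M\<^esub> y |x y. x \<in> A \<and> y \<in> B}" using a(2) b(2) by blast
next
  note a = submodD[OF A] and b = submodD[OF B]
  fix x y assume "x \<in> {x \<oplus>\<^bsub>M\<^esub> y |x y. x \<in> A \<and> y \<in> B}" "y \<in> {x \<oplus>\<^bsub>M\<^esub> y |x y. x \<in> A \<and> y \<in> B}"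
  then obtain a1 b1 a2 b2 where h: "a1 \<in> A" "b1 \<in> B" "a2 \<in> A" "b2 \<in> B" "x = a1 \<oplus>\<^bsub>M\<^esub> b1" "y = a2 \<oplus>\<^bsub>M\<^esub> b2" by blast
  have c: "a1 \<in> carrier M" "b1 \<in> carrier M" "a2 \<in> carrier M" "b2 \<in> carrier M" using h a(1) b(1) by auto
  have "x \<oplus>\<^bsub>M\<^esub> y = (a1 \<oplus>\<^bsub>M\<^esub> a2) \<oplus>\<^bsub>M\<^esub> (b1 \<oplus>\<^bsub>M\<^esub> b2)"
    using c h(5,6) by (simp add: a_ac)
  thus "x \<oplus>\<^bsub>M\<^esub> y \<in> {x \<oplus>\<^bsub>M\<^esub> y |x y. x \<in> A \<and> y \<in> B}" using a(3) b(3) h by blast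
next
  note a = submodD[OF A] and b = submodD[OF B]
  fix x assume "x \<in> {x \<oplus>\<^bsub>M\<^esub> y |x y. x \<in> A \<and> y \<in> B}"
  then obtain a1 b1 where h: "a1 \<in> A" "b1 \<in> B" "x = a1 \<oplus>\<^bsub>M\<^esub> b1" by blast
  have c: "a1 \<in> carrier M" "b1 \<in> carrier M" using h a(1) b(1) by auto
  have "\<ominus>\<^bsub>M\<^esub> x = \<ominus>\<^bsub>M\<^esub> a1 \<oplus>\<^bsub>M\<^esub> \<ominus>\<^bsub>M\<^esub> b1"
    using c h(3) by (simp add: minus_add)
  thus "\<ominus>\<^bsub>M\<^esub> x \<in> {x \<oplus>\<^bsub>M\<^esub> y |x y. x \<in> A \<and> y \<in> B}" using a(4) b(4) h by blast
next
  note a = submodD[OF A] and b = submodD[OF B]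
  fix x r assume "x \<in> {x \<oplus>\<^bsub>M\<^esub> y |x y. x \<in> A \<and> y \<in> B}" "r \<in> carrier R"
  then obtain a1 b1 where h: "a1 \<in> A" "b1 \<in> B" "x = a1 \<oplus>\<^bsub>M\<^esub> b1" by blast
  have c: "a1 \<in> carrier M" "b1 \<in> carrier M" using h a(1) b(1) by auto
  have "smult M r x = smult M r a1 \<oplus>\<^bsub>M\<^esub> smult M r b1" using sm_add c h(3) \<open>r \<in> carrier R\<close> by simp
  thus "smult M r x \<in> {x \<oplus>\<^bsub>M\<^esub> y |x y. x \<in> A \<and> y \<in> B}" using a(5) b(5) h \<open>r \<in> carrier R\<close> by blast
qed
end


context rmod begin

lemma G1: "x \<in> carrier M \<Longrightarrow> y \<in> carrier M \<Longrightarrow> z \<in> carrier M \<Longrightarrow>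
  (z \<ominus>\<^bsub>M\<^esub> x) \<oplus>\<^bsub>M\<^esub> (x \<ominus>\<^bsub>M\<^esub> y) = z \<ominus>\<^bsub>M\<^esub> y"
proof -
  assume c: "x \<in> carrier M" "y \<in> carrier M" "z \<in> carrier M"
  have "(z \<ominus>\<^bsub>M\<^esub> x) \<oplus>\<^bsub>M\<^esub> (x \<ominus>\<^bsub>M\<^esub> y) = z \<oplus>\<^bsub>M\<^esub> ((\<ominus>\<^bsub>M\<^esub> x \<oplus>\<^bsub>M\<^esub> x) \<oplus>\<^bsub>M\<^esub> \<ominus>\<^bsub>M\<^esub> y)"
    using c by (simp add: minus_eq a_assoc)
  thus ?thesis using c by (simp add: l_neg minus_eq)
qed

lemma G2: "x \<in> carrier M \<Longrightarrow> y \<in> carrier M \<Longrightarrow> \<ominus>\<^bsub>M\<^esub> (x \<ominus>\<^bsub>M\<^esub> y) = y \<ominus>\<^bsub>M\<^esub> x"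
  by (simp add: minus_eq minus_add minus_minus a_comm)

lemma G3: "d \<in> carrier M \<Longrightarrow> y \<in> carrier M \<Longrightarrow> (d \<oplus>\<^bsub>M\<^esub> y) \<ominus>\<^bsub>M\<^esub> y = d"
  by (simp add: minus_eq a_assoc r_neg)

lemma G4: "z \<in> carrier M \<Longrightarrow> y \<in> carrier M \<Longrightarrow> (z \<ominus>\<^bsub>M\<^esub> y) \<oplus>\<^bsub>M\<^esub> y = z"
  by (simp add: minus_eq a_assoc l_neg)
end


context rmod begin

lemma neg_zero[simp]: "\<ominus>\<^bsub>M\<^esub> \<zero>\<^bsub>M\<^esub> = \<zero>\<^bsub>M\<^esub>"
  using r_neg[of "\<zero>\<^bsub>M\<^esub>"] by simp

lemma coset_char: assumes D: "submod R M D" and y: "y \<in> carrier M"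
  shows "mcoset M D y = {z \<in> carrier M. z \<ominus>\<^bsub>M\<^esub> y \<in> D}"
proof
  show "mcoset M D y \<subseteq> {z \<in> carrier M. z \<ominus>\<^bsub>M\<^esub> y \<in> D}"
    using submodD(1)[OF D] y G3 unfolding mcoset_def by auto
  show "{z \<in> carrier M. z \<ominus>\<^bsub>M\<^esub> y \<in> D} \<subseteq> mcoset M D y"
  proof
    fix z assume "z \<in> {z \<in> carrier M. z \<ominus>\<^bsub>M\<^esub> y \<in> D}"
    hence "z \<in> carrier M" "z \<ominus>\<^bsub>M\<^esub> y \<in> D" by auto
    moreover have "z = (z \<ominus>\<^bsub>M\<^esub> y) \<oplus>\<^bsub>M\<^esub> y" using G4 y calculation by simp
    ultimately show "z \<in> mcoset M D y" unfolding mcoset_def by blast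
  qed
qed

lemma coset_mem: "submod R M D \<Longrightarrow> y \<in> carrier M \<Longrightarrow> y \<in> mcoset M D y"
  by (simp add: coset_char r_neg minus_eq submodD(2))

lemma coset_sub: "submod R M D \<Longrightarrow> y \<in> carrier M \<Longrightarrow> mcoset M D y \<subseteq> carrier M"
  by (simp add: coset_char)

lemma coset_eq: assumes D: "submod R M D" and x: "x \<in> carrier M" and y: "y \<in> carrier M"
  shows "mcoset M D x = mcoset M D y \<longleftrightarrow> x \<ominus>\<^bsub>M\<^esub> y \<in> D"
proof
  assume "mcoset M D x = mcoset M D y"
  hence "x \<in> mcoset M D y" using coset_mem[OF D x] by simp
  thus "x \<ominus>\<^bsub>M\<^esub> y \<in> D" using coset_char[OF D y] by simp
next
  assume h: "x \<ominus>\<^bsub>M\<^esub> y \<in> D"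
  have h2: "y \<ominus>\<^bsub>M\<^esub> x \<in> D" using submodD(4)[OF D h] G2 x y by simp
  show "mcoset M D x = mcoset M D y"
    unfolding coset_char[OF D x] coset_char[OF D y]
  proof (intro Collect_cong conj_cong refl iffI)
    fix z assume "z \<in> carrier M" "z \<ominus>\<^bsub>M\<^esub> x \<in> D"
    thus "z \<ominus>\<^bsub>M\<^esub> y \<in> D" using submodD(3)[OF D _ h] G1 x y by metis
  next
    fix z assume "z \<in> carrier M" "z \<ominus>\<^bsub>M\<^esub> y \<in> D"
    thus "z \<ominus>\<^bsub>M\<^esub> x \<in> D" using submodD(3)[OF D _ h2] G1 x y by metis
  qed
qed

lemma coset_zero: "submod R M D \<Longrightarrow> mcoset M D \<zero>\<^bsub>M\<^esub> = D"
  using coset_char[of D "\<zero>\<^bsub>M\<^esub>"] submodD(1)[of D] by (auto simp: minus_eq add.inv_one subsetD)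

lemma coset_add: assumes D: "submod R M D" and x: "x \<in> carrier M" and y: "y \<in> carrier M"
  shows "msum M (mcoset M D x) (mcoset M D y) = mcoset M D (x \<oplus>\<^bsub>M\<^esub> y)"
proof
  note dc = submodD(1)[OF D]
  show "msum M (mcoset M D x) (mcoset M D y) \<subseteq> mcoset M D (x \<oplus>\<^bsub>M\<^esub> y)"
  proof
    fix z assume "z \<in> msum M (mcoset M D x) (mcoset M D y)"
    then obtain a b where "a \<in> D" "b \<in> D" "z = (a \<oplus>\<^bsub>M\<^esub> x) \<oplus>\<^bsub>M\<^esub> (b \<oplus>\<^bsub>M\<^esub> y)"
      unfolding msum_def mcoset_def by blast
    moreover have "(a \<oplus>\<^bsub>M\<^esub> x) \<oplus>\<^bsub>M\<^esub> (b \<oplus>\<^bsub>M\<^esub> y) = (a \<oplus>\<^bsub>M\<^esub> b) \<oplus>\<^bsub>M\<^esub> (x \<oplus>\<^bsub>M\<^esub> y)"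
      using calculation dc x y by (simp add: a_ac subsetD)
    ultimately show "z \<in> mcoset M D (x \<oplus>\<^bsub>M\<^esub> y)" unfolding mcoset_def using submodD(3)[OF D] by blast
  qed
  show "mcoset M D (x \<oplus>\<^bsub>M\<^esub> y) \<subseteq> msum M (mcoset M D x) (mcoset M D y)"
  proof
    fix z assume "z \<in> mcoset M D (x \<oplus>\<^bsub>M\<^esub> y)"
    then obtain a where a: "a \<in> D" "z = a \<oplus>\<^bsub>M\<^esub> (x \<oplus>\<^bsub>M\<^esub> y)" unfolding mcoset_def by blast
    have "z = (a \<oplus>\<^bsub>M\<^esub> x) \<oplus>\<^bsub>M\<^esub> (\<zero>\<^bsub>M\<^esub> \<oplus>\<^bsub>M\<^esub> y)" using a dc x y by (simp add: a_ac subsetD)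
    moreover have "a \<oplus>\<^bsub>M\<^esub> x \<in> mcoset M D x" "\<zero>\<^bsub>M\<^esub> \<oplus>\<^bsub>M\<^esub> y \<in> mcoset M D y"
      unfolding mcoset_def using a submodD(2)[OF D] by blast+
    ultimately show "z \<in> msum M (mcoset M D x) (mcoset M D y)" unfolding msum_def by blast
  qed
qed

lemma quot_simps: "carrier (quot_mod M D) = mcoset M D ` carrier M"
  "zero (quot_mod M D) = D" "add (quot_mod M D) = msum M"
  "smult (quot_mod M D) = (\<lambda>r A. msum M D ((\<lambda>a. smult M r a) ` A))"
  unfolding quot_mod_def by simp_all

lemma coset_smult: assumes D: "submod R M D" and x: "x \<in> carrier M" and r: "r \<in> carrier R"
  shows "smult (quot_mod M D) r (mcoset M D x) = mcoset M D (smult M r x)"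
proof
  note dc = submodD(1)[OF D]
  show "smult (quot_mod M D) r (mcoset M D x) \<subseteq> mcoset M D (smult M r x)"
  proof
    fix z assume "z \<in> smult (quot_mod M D) r (mcoset M D x)"
    then obtain a b where ab: "a \<in> D" "b \<in> D" "z = a \<oplus>\<^bsub>M\<^esub> smult M r (b \<oplus>\<^bsub>M\<^esub> x)"
      unfolding quot_simps msum_def mcoset_def by blast
    have c: "a \<in> carrier M" "b \<in> carrier M" using ab dc by auto
    have "z = (a \<oplus>\<^bsub>M\<^esub> smult M r b) \<oplus>\<^bsub>M\<^esub> smult M r x"
      using ab c x r sm_add sm_closed by (simp add: a_assoc)
    moreover have "a \<oplus>\<^bsub>M\<^esub> smult M r b \<in> D" using ab r submodD[OF D] by blast
    ultimately show "z \<in> mcoset M D (smult M r x)" unfolding mcoset_def by blast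
  qed
  show "mcoset M D (smult M r x) \<subseteq> smult (quot_mod M D) r (mcoset M D x)"
  proof
    fix z assume "z \<in> mcoset M D (smult M r x)"
    then obtain a where a: "a \<in> D" "z = a \<oplus>\<^bsub>M\<^esub> smult M r x" unfolding mcoset_def by blast
    have "x = \<zero>\<^bsub>M\<^esub> \<oplus>\<^bsub>M\<^esub> x" using x by simp
    hence "x \<in> mcoset M D x" unfolding mcoset_def using submodD(2)[OF D] by blast
    thus "z \<in> smult (quot_mod M D) r (mcoset M D x)" unfolding quot_simps msum_def using a by blast
  qed
qed

lemma coset_inv: assumes D: "submod R M D" and x: "x \<in> carrier M"
  shows "a_inv (quot_mod M D) (mcoset M D x) = mcoset M D (\<ominus>\<^bsub>M\<^esub> x)"
proof -
  have "(THE Y. Y \<in> mcoset M D ` carrier M \<and> msum M (mcoset M D x) Y = D \<and> msum M Y (mcoset M D x) = D)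
     = mcoset M D (\<ominus>\<^bsub>M\<^esub> x)"
  proof (rule the_equality)
    have "msum M (mcoset M D x) (mcoset M D (\<ominus>\<^bsub>M\<^esub> x)) = D"
      using coset_add[OF D x] x coset_zero[OF D] by (simp add: r_neg)
    moreover have "msum M (mcoset M D (\<ominus>\<^bsub>M\<^esub> x)) (mcoset M D x) = D"
      using coset_add[OF D _ x] x coset_zero[OF D] by (simp add: l_neg)
    ultimately show "mcoset M D (\<ominus>\<^bsub>M\<^esub> x) \<in> mcoset M D ` carrier M \<and>
      msum M (mcoset M D x) (mcoset M D (\<ominus>\<^bsub>M\<^esub> x)) = D \<and> msum M (mcoset M D (\<ominus>\<^bsub>M\<^esub> x)) (mcoset M D x) = D"
      using x by simp
  next
    fix Y assume "Y \<in> mcoset M D ` carrier M \<and> msum M (mcoset M D x) Y = D \<and> msum M Y (mcoset M D x) = D"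
    then obtain y where y: "y \<in> carrier M" "Y = mcoset M D y" "msum M (mcoset M D x) (mcoset M D y) = D"
      by auto
    hence "mcoset M D (x \<oplus>\<^bsub>M\<^esub> y) = mcoset M D \<zero>\<^bsub>M\<^esub>" using coset_add[OF D x] coset_zero[OF D] by simp
    hence "x \<oplus>\<^bsub>M\<^esub> y \<in> D" using coset_eq[OF D] x y by (simp add: minus_eq)
    moreover have "y \<ominus>\<^bsub>M\<^esub> (\<ominus>\<^bsub>M\<^esub> x) = x \<oplus>\<^bsub>M\<^esub> y" using x y by (simp add: minus_eq minus_minus a_comm)
    ultimately show "Y = mcoset M D (\<ominus>\<^bsub>M\<^esub> x)" using coset_eq[OF D] x y by simp
  qed
  thus ?thesis by (simp add: a_inv_def m_inv_def quot_simps)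
qed

lemma quot_submod: assumes D: "submod R M D" and S: "submod R M S"
  shows "submod R (quot_mod M D) (mcoset M D ` S)"
  unfolding submod_def
proof (intro conjI ballI)
  note s = submodD[OF S]
  show "mcoset M D ` S \<subseteq> carrier (quot_mod M D)" using s(1) by (auto simp: quot_simps)
  show "\<zero>\<^bsub>quot_mod M D\<^esub> \<in> mcoset M D ` S" using s(2) coset_zero[OF D] by (auto simp: quot_simps)
next
  note s = submodD[OF S]
  fix A B assume "A \<in> mcoset M D ` S" "B \<in> mcoset M D ` S"
  then obtain a b where "a \<in> S" "b \<in> S" "A = mcoset M D a" "B = mcoset M D b" by blast
  moreover have "a \<in> carrier M" "b \<in> carrier M" using calculation s(1) by auto
  ultimately show "A \<oplus>\<^bsub>quot_mod M D\<^esub> B \<in> mcoset M D ` S" using coset_add[OF D] s by (auto simp: quot_simps)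
next
  note s = submodD[OF S]
  fix A assume "A \<in> mcoset M D ` S"
  then obtain a where "a \<in> S" "A = mcoset M D a" by blast
  thus "\<ominus>\<^bsub>quot_mod M D\<^esub> A \<in> mcoset M D ` S" using coset_inv[OF D] s by auto
next
  note s = submodD[OF S]
  fix A r assume "A \<in> mcoset M D ` S" "r \<in> carrier R"
  then obtain a where "a \<in> S" "A = mcoset M D a" by blast
  thus "smult (quot_mod M D) r A \<in> mcoset M D ` S" using coset_smult[OF D] s \<open>r \<in> carrier R\<close> by auto
qed

end


context rmod begin

lemma msum_comm: "A \<subseteq> carrier M \<Longrightarrow> B \<subseteq> carrier M \<Longrightarrow> msum M A B = msum M B A"
  unfolding msum_def by (auto, (metis a_comm subsetD)+)

lemma msum_sub: "submod R M A \<Longrightarrow> submod R M B \<Longrightarrow> msum M A B \<subseteq> carrier M"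
  using submod_msum submodD(1) by blast

lemma decomp_sym: "is_decomp R M D D' \<Longrightarrow> is_decomp R M D' D"
  unfolding is_decomp_def using msum_comm submodD(1) by (metis inf_commute)

lemma decomp_split: assumes "is_decomp R M D D'" "m \<in> carrier M"
  obtains d d' where "d \<in> D" "d' \<in> D'" "m = d \<oplus>\<^bsub>M\<^esub> d'"
  using assms unfolding is_decomp_def msum_def by blast

lemma decomp_zero: "is_decomp R M D D' \<Longrightarrow> x \<in> D \<Longrightarrow> x \<in> D' \<Longrightarrow> x = \<zero>\<^bsub>M\<^esub>"
  unfolding is_decomp_def by blast

lemma msum_absorb: assumes X: "submod R M X" and D: "submod R M D" and "D \<subseteq> X"
  shows "msum M X D = X"
proof
  show "msum M X D \<subseteq> X" unfolding msum_def using assms submodD(3)[OF X] by blast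
  show "X \<subseteq> msum M X D"
  proof
    fix x assume "x \<in> X"
    hence "x = x \<oplus>\<^bsub>M\<^esub> \<zero>\<^bsub>M\<^esub>" using submodD(1)[OF X] by auto
    thus "x \<in> msum M X D" unfolding msum_def using \<open>x \<in> X\<close> submodD(2)[OF D] by blast
  qed
qed

lemma endo_zero: assumes "endo R M f" shows "f \<zero>\<^bsub>M\<^esub> = \<zero>\<^bsub>M\<^esub>"
proof -
  have c: "f \<zero>\<^bsub>M\<^esub> \<in> carrier M" using assms unfolding endo_def by auto
  have "f \<zero>\<^bsub>M\<^esub> = f \<zero>\<^bsub>M\<^esub> \<oplus>\<^bsub>M\<^esub> f \<zero>\<^bsub>M\<^esub>"
    using assms unfolding endo_def by (metis zero_closed l_zero)
  thus ?thesis using c by (metis add.l_cancel_one' )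
qed

lemma endo_image: assumes f: "endo R M f" and S: "submod R M S" shows "submod R M (f ` S)"
  unfolding submod_def
proof (intro conjI ballI)
  note s = submodD[OF S]
  have fc: "\<And>x. x \<in> carrier M \<Longrightarrow> f x \<in> carrier M" using f unfolding endo_def by auto
  have fa: "\<And>x y. x \<in> carrier M \<Longrightarrow> y \<in> carrier M \<Longrightarrow> f (x \<oplus>\<^bsub>M\<^esub> y) = f x \<oplus>\<^bsub>M\<^esub> f y"
    using f unfolding endo_def by auto
  have fs: "\<And>r x. r \<in> carrier R \<Longrightarrow> x \<in> carrier M \<Longrightarrow> f (smult M r x) = smult M r (f x)"
    using f unfolding endo_def by auto
  show "f ` S \<subseteq> carrier M" using s(1) fc by auto
  show "\<zero>\<^bsub>M\<^esub> \<in> f ` S" using s(2) endo_zero[OF f] by (metis image_eqI)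
  fix x y assume "x \<in> f ` S" "y \<in> f ` S"
  then obtain a b where ab: "a \<in> S" "b \<in> S" "x = f a" "y = f b" by blast
  have "a \<in> carrier M" "b \<in> carrier M" using ab s(1) by auto
  hence "x \<oplus>\<^bsub>M\<^esub> y = f (a \<oplus>\<^bsub>M\<^esub> b)" using fa[of a b] ab by simp
  thus "x \<oplus>\<^bsub>M\<^esub> y \<in> f ` S" using s(3) ab by blast
next
  note s = submodD[OF S]
  have fc: "\<And>x. x \<in> carrier M \<Longrightarrow> f x \<in> carrier M" using f unfolding endo_def by auto
  have fa: "\<And>x y. x \<in> carrier M \<Longrightarrow> y \<in> carrier M \<Longrightarrow> f (x \<oplus>\<^bsub>M\<^esub> y) = f x \<oplus>\<^bsub>M\<^esub> f y"
    using f unfolding endo_def by auto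
  fix x assume "x \<in> f ` S"
  then obtain a where a: "a \<in> S" "x = f a" by blast
  have ac: "a \<in> carrier M" using a s(1) by auto
  have "f (\<ominus>\<^bsub>M\<^esub> a) \<oplus>\<^bsub>M\<^esub> f a = \<zero>\<^bsub>M\<^esub>"
    using fa[of "\<ominus>\<^bsub>M\<^esub> a" a] ac endo_zero[OF f] by (simp add: l_neg)
  hence "\<ominus>\<^bsub>M\<^esub> x = f (\<ominus>\<^bsub>M\<^esub> a)" using a ac fc by (metis a_inv_closed minus_equality)
  thus "\<ominus>\<^bsub>M\<^esub> x \<in> f ` S" using s(4) a by blast
next
  note s = submodD[OF S]
  have fs: "\<And>r x. r \<in> carrier R \<Longrightarrow> x \<in> carrier M \<Longrightarrow> f (smult M r x) = smult M r (f x)"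
    using f unfolding endo_def by auto
  fix x r assume "x \<in> f ` S" "r \<in> carrier R"
  then obtain a where a: "a \<in> S" "x = f a" by blast
  hence "smult M r x = f (smult M r a)" using fs s(1) \<open>r \<in> carrier R\<close> by auto
  thus "smult M r x \<in> f ` S" using s(5) a \<open>r \<in> carrier R\<close> by blast
qed

lemma small_up: assumes D: "submod R M D" and K: "small_in R M D K"
  shows "small_in R M (carrier M) K"
  unfolding small_in_def
proof (intro conjI allI impI)
  have Ks: "submod R M K" "K \<subseteq> D" using K unfolding small_in_def by auto
  show "submod R M K" by (fact Ks(1))
  show "K \<subseteq> carrier M" using Ks submodD(1)[OF D] by auto
  fix L assume h: "submod R M L \<and> L \<subseteq> carrier M \<and> msum M K L = carrier M"
  have N: "submod R M (D \<inter> L)" using submod_Int D h by blast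
  have "msum M K (D \<inter> L) = D"
  proof
    show "msum M K (D \<inter> L) \<subseteq> D" unfolding msum_def using Ks submodD(3)[OF D] by blast
    show "D \<subseteq> msum M K (D \<inter> L)"
    proof
      fix d assume d: "d \<in> D"
      hence "d \<in> msum M K L" using h submodD(1)[OF D] by auto
      then obtain k l where kl: "k \<in> K" "l \<in> L" "d = k \<oplus>\<^bsub>M\<^esub> l" unfolding msum_def by blast
      have kc: "k \<in> carrier M" "l \<in> carrier M" using kl Ks submodD(1)[OF D] h by auto
      have "l = (\<ominus>\<^bsub>M\<^esub> k) \<oplus>\<^bsub>M\<^esub> d" using kl kc by (simp add: a_assoc[symmetric] l_neg)
      hence "l \<in> D" using d kl Ks submodD[OF D] by blast
      thus "d \<in> msum M K (D \<inter> L)" using kl unfolding msum_def by blast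
    qed
  qed
  hence "D \<inter> L = D" using K N unfolding small_in_def by blast
  hence DL: "D \<subseteq> L" by blast
  show "L = carrier M"
  proof
    show "L \<subseteq> carrier M" using h by blast
    show "carrier M \<subseteq> L"
    proof
      fix m assume "m \<in> carrier M"
      then obtain k l where "k \<in> K" "l \<in> L" "m = k \<oplus>\<^bsub>M\<^esub> l" using h unfolding msum_def by blast
      thus "m \<in> L" using DL Ks submodD(3) h by blast
    qed
  qed
qed

end


context rmod begin

lemma c_to_a: assumes pp: "pi_projective R M" and c: "oplus_principally_supplemented R M"
  shows "principally_lifting R M"
  unfolding principally_lifting_def
proof (intro allI impI)
  fix X assume cx: "cyclic_sub R M X"
  have Xs: "submod R M X" by (rule cyclic_submod[OF cx])
  obtain D where Dsum: "direct_summand R M D" and DX: "msum M D X = carrier M"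
    and sm: "small_in R M D (D \<inter> X)" using c cx unfolding oplus_principally_supplemented_def by blast
  obtain D'' where dec: "is_decomp R M D D''" using Dsum unfolding direct_summand_def by blast
  have Ds: "submod R M D" and D''s: "submod R M D''" using dec unfolding is_decomp_def by auto
  have XD: "msum M X D = carrier M" using DX msum_comm submodD(1) Ds Xs by metis
  obtain f where f: "endo R M f" and fX: "f ` carrier M \<subseteq> X"
    and fD: "\<forall>x\<in>carrier M. x \<ominus>\<^bsub>M\<^esub> f x \<in> D"
    using pp Xs Ds XD unfolding pi_projective_def by blast
  have fc: "\<And>x. x \<in> carrier M \<Longrightarrow> f x \<in> carrier M" using f unfolding endo_def by auto
  have dc: "D \<subseteq> carrier M" "D'' \<subseteq> carrier M" using Ds D''s submodD(1) by auto
  define E where "E = f ` D''"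
  have Es: "submod R M E" unfolding E_def by (rule endo_image[OF f D''s])
  have "msum M E D = carrier M"
  proof
    show "msum M E D \<subseteq> carrier M" using msum_sub[OF Es Ds] .
    show "carrier M \<subseteq> msum M E D"
    proof
      fix m assume m: "m \<in> carrier M"
      then obtain d d' where dd: "d \<in> D" "d' \<in> D''" "m = d \<oplus>\<^bsub>M\<^esub> d'" using decomp_split[OF dec] by blast
      have cc: "d \<in> carrier M" "d' \<in> carrier M" "f d' \<in> carrier M" using dd dc fc by auto
      have "m = f d' \<oplus>\<^bsub>M\<^esub> (d \<oplus>\<^bsub>M\<^esub> (d' \<ominus>\<^bsub>M\<^esub> f d'))"
        using cc dd(3) by (simp add: minus_eq a_ac l_neg r_neg)
      moreover have "d \<oplus>\<^bsub>M\<^esub> (d' \<ominus>\<^bsub>M\<^esub> f d') \<in> D" using fD cc dd submodD(3)[OF Ds] by blast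
      moreover have "f d' \<in> E" unfolding E_def using dd by blast
      ultimately show "m \<in> msum M E D" unfolding msum_def by blast
    qed
  qed
  moreover have "E \<inter> D = {\<zero>\<^bsub>M\<^esub>}"
  proof
    show "{\<zero>\<^bsub>M\<^esub>} \<subseteq> E \<inter> D" using submodD(2)[OF Es] submodD(2)[OF Ds] by blast
    show "E \<inter> D \<subseteq> {\<zero>\<^bsub>M\<^esub>}"
    proof
      fix y assume "y \<in> E \<inter> D"
      then obtain d' where d': "d' \<in> D''" "y = f d'" "f d' \<in> D" unfolding E_def by blast
      have cc: "d' \<in> carrier M" "f d' \<in> carrier M" using d' dc fc by auto
      have "d' = (d' \<ominus>\<^bsub>M\<^esub> f d') \<oplus>\<^bsub>M\<^esub> f d'" using G4 cc by simp
      hence "d' \<in> D" using fD cc d' submodD(3)[OF Ds] by metis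
      hence "d' = \<zero>\<^bsub>M\<^esub>" using decomp_zero[OF dec] d' by blast
      thus "y \<in> {\<zero>\<^bsub>M\<^esub>}" using d' endo_zero[OF f] by simp
    qed
  qed
  ultimately have "is_decomp R M E D" unfolding is_decomp_def using Es Ds by blast
  moreover have "E \<subseteq> X" unfolding E_def using fX dc by blast
  moreover have "small_in R M (carrier M) (D \<inter> X)" by (rule small_up[OF Ds sm])
  ultimately show "\<exists>D D'. is_decomp R M D D' \<and> D \<subseteq> X \<and> small_in R M (carrier M) (D' \<inter> X)" by blast
qed

end


context rmod begin

lemma quot_msum: "msum (quot_mod M D) A B = {msum M a b | a b. a \<in> A \<and> b \<in> B}"
  unfolding msum_def quot_simps by simp

lemma quot_msum_sub: assumes D: "submod R M D" and A: "A \<subseteq> carrier M" and B: "B \<subseteq> carrier M"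
  shows "msum (quot_mod M D) (mcoset M D ` A) (mcoset M D ` B) \<subseteq> carrier (quot_mod M D)"
proof
  fix C assume "C \<in> msum (quot_mod M D) (mcoset M D ` A) (mcoset M D ` B)"
  then obtain a b where ab: "a \<in> A" "b \<in> B" "C = msum M (mcoset M D a) (mcoset M D b)"
    unfolding quot_msum by blast
  have c: "a \<in> carrier M" "b \<in> carrier M" using ab A B by auto
  hence "C = mcoset M D (a \<oplus>\<^bsub>M\<^esub> b)" using coset_add[OF D c] ab by simp
  thus "C \<in> carrier (quot_mod M D)" using c by (simp add: quot_simps)
qed

lemma coset_full: assumes D: "submod R M D" and S: "S \<subseteq> carrier M"
  and eq: "mcoset M D ` S = carrier (quot_mod M D)" and m: "m \<in> carrier M"
  obtains s where "s \<in> S" "m \<ominus>\<^bsub>M\<^esub> s \<in> D"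
proof -
  have "mcoset M D m \<in> mcoset M D ` S" using eq m by (simp add: quot_simps)
  then obtain s where s: "s \<in> S" "mcoset M D m = mcoset M D s" by blast
  thus ?thesis using that coset_eq[OF D m] S by blast
qed

lemma b_to_c: assumes b: "principally_goldie_star_lifting R M"
  shows "oplus_principally_supplemented R M"
  unfolding oplus_principally_supplemented_def
proof (intro allI impI)
  fix X assume cx: "cyclic_sub R M X"
  have Xs: "submod R M X" by (rule cyclic_submod[OF cx])
  obtain D where Dsum: "direct_summand R M D" and bs: "beta_star R M X D"
    using b cx unfolding principally_goldie_star_lifting_def by blast
  obtain D' where dec: "is_decomp R M D D'" using Dsum unfolding direct_summand_def by blast
  have Ds: "submod R M D" and D's: "submod R M D'" using dec unfolding is_decomp_def by auto
  have dc: "D \<subseteq> carrier M" "D' \<subseteq> carrier M" "X \<subseteq> carrier M" using Ds D's Xs submodD(1) by auto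
  have b1: "small_in R (quot_mod M X) (carrier (quot_mod M X)) (quot_sub M X (msum M X D))"
   and b2: "small_in R (quot_mod M D) (carrier (quot_mod M D)) (quot_sub M D (msum M X D))"
    using bs unfolding beta_star_def by auto
  have XD's: "submod R M (msum M X D')" using submod_msum Xs D's by blast
  have "msum (quot_mod M X) (quot_sub M X (msum M X D)) (mcoset M X ` msum M X D') = carrier (quot_mod M X)"
  proof
    show "msum (quot_mod M X) (quot_sub M X (msum M X D)) (mcoset M X ` msum M X D') \<subseteq> carrier (quot_mod M X)"
      unfolding quot_sub_def by (rule quot_msum_sub[OF Xs msum_sub[OF Xs Ds] msum_sub[OF Xs D's]])
    show "carrier (quot_mod M X) \<subseteq> msum (quot_mod M X) (quot_sub M X (msum M X D)) (mcoset M X ` msum M X D')"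
    proof
      fix C assume "C \<in> carrier (quot_mod M X)"
      then obtain m where m: "m \<in> carrier M" "C = mcoset M X m" by (auto simp: quot_simps)
      then obtain d d' where dd: "d \<in> D" "d' \<in> D'" "m = d \<oplus>\<^bsub>M\<^esub> d'" using decomp_split[OF dec] by blast
      have cc: "d \<in> carrier M" "d' \<in> carrier M" using dd dc by auto
      have "d \<in> msum M X D" "d' \<in> msum M X D'" unfolding msum_def
        using dd cc submodD(2)[OF Xs] l_zero[of d, symmetric] l_zero[of d', symmetric] by blast+
      moreover have "C = msum M (mcoset M X d) (mcoset M X d')" using coset_add[OF Xs] cc m dd by simp
      ultimately show "C \<in> msum (quot_mod M X) (quot_sub M X (msum M X D)) (mcoset M X ` msum M X D')"
        unfolding quot_msum quot_sub_def by blast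
    qed
  qed
  moreover have "submod R (quot_mod M X) (mcoset M X ` msum M X D')" by (rule quot_submod[OF Xs XD's])
  moreover have "mcoset M X ` msum M X D' \<subseteq> carrier (quot_mod M X)"
    using msum_sub[OF Xs D's] by (auto simp: quot_simps)
  ultimately have full1: "mcoset M X ` msum M X D' = carrier (quot_mod M X)"
    using b1 unfolding small_in_def by blast
  have D'X: "msum M D' X = carrier M"
  proof
    show "msum M D' X \<subseteq> carrier M" by (rule msum_sub[OF D's Xs])
    show "carrier M \<subseteq> msum M D' X"
    proof
      fix m assume m: "m \<in> carrier M"
      obtain s where s: "s \<in> msum M X D'" "m \<ominus>\<^bsub>M\<^esub> s \<in> X"
        using coset_full[OF Xs msum_sub[OF Xs D's] full1 m] by blast
      then obtain x d' where xd: "x \<in> X" "d' \<in> D'" "s = x \<oplus>\<^bsub>M\<^esub> d'" unfolding msum_def by blast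
      have cc: "x \<in> carrier M" "d' \<in> carrier M" using xd dc by auto
      have sc: "s \<in> carrier M" using xd(3) cc by simp
      have tc: "m \<ominus>\<^bsub>M\<^esub> s \<in> carrier M" using sc m by simp
      have "m = (m \<ominus>\<^bsub>M\<^esub> s) \<oplus>\<^bsub>M\<^esub> s" using G4[OF m sc] by simp
      also have "\<dots> = (m \<ominus>\<^bsub>M\<^esub> s) \<oplus>\<^bsub>M\<^esub> (x \<oplus>\<^bsub>M\<^esub> d')" using xd(3) by simp
      also have "\<dots> = d' \<oplus>\<^bsub>M\<^esub> ((m \<ominus>\<^bsub>M\<^esub> s) \<oplus>\<^bsub>M\<^esub> x)" using cc tc by (simp add: a_ac)
      finally have "m = d' \<oplus>\<^bsub>M\<^esub> ((m \<ominus>\<^bsub>M\<^esub> s) \<oplus>\<^bsub>M\<^esub> x)" .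
      moreover have "(m \<ominus>\<^bsub>M\<^esub> s) \<oplus>\<^bsub>M\<^esub> x \<in> X" using s xd submodD(3)[OF Xs] by blast
      ultimately show "m \<in> msum M D' X" unfolding msum_def using xd by blast
    qed
  qed
  have "small_in R M D' (D' \<inter> X)"
    unfolding small_in_def
  proof (intro conjI allI impI)
    show "submod R M (D' \<inter> X)" using submod_Int D's Xs by blast
    show "D' \<inter> X \<subseteq> D'" by blast
    fix N assume h: "submod R M N \<and> N \<subseteq> D' \<and> msum M (D' \<inter> X) N = D'"
    have Ns: "submod R M N" using h by blast
    have ND: "submod R M (msum M N D)" using submod_msum Ns Ds by blast
    have "msum (quot_mod M D) (quot_sub M D (msum M X D)) (mcoset M D ` msum M N D) = carrier (quot_mod M D)"
    proof
      show "msum (quot_mod M D) (quot_sub M D (msum M X D)) (mcoset M D ` msum M N D) \<subseteq> carrier (quot_mod M D)"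
        unfolding quot_sub_def by (rule quot_msum_sub[OF Ds msum_sub[OF Xs Ds] msum_sub[OF Ns Ds]])
      show "carrier (quot_mod M D) \<subseteq> msum (quot_mod M D) (quot_sub M D (msum M X D)) (mcoset M D ` msum M N D)"
      proof
        fix C assume "C \<in> carrier (quot_mod M D)"
        then obtain m where m: "m \<in> carrier M" "C = mcoset M D m" by (auto simp: quot_simps)
        then obtain d d' where dd: "d \<in> D" "d' \<in> D'" "m = d \<oplus>\<^bsub>M\<^esub> d'" using decomp_split[OF dec] by blast
        then obtain k n where kn: "k \<in> D' \<inter> X" "n \<in> N" "d' = k \<oplus>\<^bsub>M\<^esub> n" using h unfolding msum_def by blast
        have cc: "d \<in> carrier M" "k \<in> carrier M" "n \<in> carrier M" using dd kn dc h by auto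
        have "m = k \<oplus>\<^bsub>M\<^esub> (n \<oplus>\<^bsub>M\<^esub> d)" using cc dd(3) kn(3) by (simp add: a_ac)
        hence "C = msum M (mcoset M D k) (mcoset M D (n \<oplus>\<^bsub>M\<^esub> d))" using coset_add[OF Ds] cc m by simp
        moreover have "k \<in> msum M X D" unfolding msum_def using kn cc submodD(2)[OF Ds] r_zero[of k, symmetric]
          by blast
        moreover have "n \<oplus>\<^bsub>M\<^esub> d \<in> msum M N D" unfolding msum_def using kn dd by blast
        ultimately show "C \<in> msum (quot_mod M D) (quot_sub M D (msum M X D)) (mcoset M D ` msum M N D)"
          unfolding quot_msum quot_sub_def by blast
      qed
    qed
    moreover have "submod R (quot_mod M D) (mcoset M D ` msum M N D)" by (rule quot_submod[OF Ds ND])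
    moreover have "mcoset M D ` msum M N D \<subseteq> carrier (quot_mod M D)"
      using msum_sub[OF Ns Ds] by (auto simp: quot_simps)
    ultimately have full2: "mcoset M D ` msum M N D = carrier (quot_mod M D)"
      using b2 unfolding small_in_def by blast
    show "N = D'"
    proof
      show "N \<subseteq> D'" using h by blast
      show "D' \<subseteq> N"
      proof
        fix d' assume d': "d' \<in> D'"
        hence dm: "d' \<in> carrier M" using dc by auto
        obtain s where s: "s \<in> msum M N D" "d' \<ominus>\<^bsub>M\<^esub> s \<in> D"
          using coset_full[OF Ds msum_sub[OF Ns Ds] full2 dm] by blast
        then obtain n d where nd: "n \<in> N" "d \<in> D" "s = n \<oplus>\<^bsub>M\<^esub> d" unfolding msum_def by blast
        have cc: "n \<in> carrier M" "d \<in> carrier M" using nd h dc by auto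
        have "(d' \<ominus>\<^bsub>M\<^esub> s) \<oplus>\<^bsub>M\<^esub> d = d' \<ominus>\<^bsub>M\<^esub> n"
        proof -
          have "(d' \<ominus>\<^bsub>M\<^esub> s) \<oplus>\<^bsub>M\<^esub> d = (d' \<oplus>\<^bsub>M\<^esub> \<ominus>\<^bsub>M\<^esub> n) \<oplus>\<^bsub>M\<^esub> (\<ominus>\<^bsub>M\<^esub> d \<oplus>\<^bsub>M\<^esub> d)"
            using cc dm nd(3) by (simp add: minus_eq minus_add a_assoc)
          thus ?thesis using cc dm by (simp add: l_neg minus_eq)
        qed
        hence i1: "d' \<ominus>\<^bsub>M\<^esub> n \<in> D" using s nd submodD(3)[OF Ds] by metis
        have i2: "d' \<ominus>\<^bsub>M\<^esub> n \<in> D'" using submod_minus[OF D's d'] nd h by blast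
        have "d' \<ominus>\<^bsub>M\<^esub> n = \<zero>\<^bsub>M\<^esub>" using decomp_zero[OF dec i1 i2] .
        hence "d' = n" using G4[OF dm cc(1)] cc by simp
        thus "d' \<in> N" using nd by simp
      qed
    qed
  qed
  moreover have "direct_summand R M D'" unfolding direct_summand_def using decomp_sym[OF dec] by blast
  ultimately show "\<exists>D. direct_summand R M D \<and> msum M D X = carrier M \<and> small_in R M D (D \<inter> X)"
    using D'X by blast
qed

end


context rmod begin

lemma a_to_b: assumes a: "principally_lifting R M"
  shows "principally_goldie_star_lifting R M"
  unfolding principally_goldie_star_lifting_def
proof (intro allI impI)
  fix X assume cx: "cyclic_sub R M X"
  have Xs: "submod R M X" by (rule cyclic_submod[OF cx])
  obtain D D' where dec: "is_decomp R M D D'" and DX: "D \<subseteq> X"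
    and sm: "small_in R M (carrier M) (D' \<inter> X)" using a cx unfolding principally_lifting_def by blast
  have Ds: "submod R M D" and D's: "submod R M D'" using dec unfolding is_decomp_def by auto
  have dc: "D \<subseteq> carrier M" "D' \<subseteq> carrier M" "X \<subseteq> carrier M" using Ds D's Xs submodD(1) by auto
  have XD: "msum M X D = X" by (rule msum_absorb[OF Xs Ds DX])
  have qX: "quot_sub M X X = {X}"
  proof -
    have "\<And>x. x \<in> X \<Longrightarrow> mcoset M X x = X"
      using coset_eq[OF Xs] coset_zero[OF Xs] dc by (metis r_zero neg_zero minus_eq subsetD zero_closed)
    moreover have "X \<noteq> {}" using submodD(2)[OF Xs] by blast
    ultimately show ?thesis unfolding quot_sub_def by auto
  qed
  have p1: "small_in R (quot_mod M X) (carrier (quot_mod M X)) (quot_sub M X (msum M X D))"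
    unfolding small_in_def
  proof (intro conjI allI impI)
    show "submod R (quot_mod M X) (quot_sub M X (msum M X D))"
      unfolding XD quot_sub_def by (rule quot_submod[OF Xs Xs])
    show "quot_sub M X (msum M X D) \<subseteq> carrier (quot_mod M X)"
      unfolding XD quot_sub_def using dc by (auto simp: quot_simps)
    fix Lq assume h: "submod R (quot_mod M X) Lq \<and> Lq \<subseteq> carrier (quot_mod M X) \<and>
        msum (quot_mod M X) (quot_sub M X (msum M X D)) Lq = carrier (quot_mod M X)"
    have "msum (quot_mod M X) (quot_sub M X (msum M X D)) Lq = Lq"
    proof -
      have "\<And>C. C \<in> Lq \<Longrightarrow> msum M X C = C"
      proof -
        fix C assume "C \<in> Lq"
        then obtain c where c: "c \<in> carrier M" "C = mcoset M X c" using h by (auto simp: quot_simps)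
        thus "msum M X C = C" using coset_add[OF Xs zero_closed c(1)] coset_zero[OF Xs] by simp
      qed
      thus ?thesis unfolding XD qX quot_msum by auto
    qed
    thus "Lq = carrier (quot_mod M X)" using h by simp
  qed
  have p2: "small_in R (quot_mod M D) (carrier (quot_mod M D)) (quot_sub M D (msum M X D))"
    unfolding small_in_def
  proof (intro conjI allI impI)
    show "submod R (quot_mod M D) (quot_sub M D (msum M X D))"
      unfolding XD quot_sub_def by (rule quot_submod[OF Ds Xs])
    show "quot_sub M D (msum M X D) \<subseteq> carrier (quot_mod M D)"
      unfolding XD quot_sub_def using dc by (auto simp: quot_simps)
    fix Lq assume h: "submod R (quot_mod M D) Lq \<and> Lq \<subseteq> carrier (quot_mod M D) \<and>
        msum (quot_mod M D) (quot_sub M D (msum M X D)) Lq = carrier (quot_mod M D)"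
    have lq: "D \<in> Lq" "\<And>A B. A \<in> Lq \<Longrightarrow> B \<in> Lq \<Longrightarrow> msum M A B \<in> Lq"
      "\<And>A. A \<in> Lq \<Longrightarrow> a_inv (quot_mod M D) A \<in> Lq"
      "\<And>A r. A \<in> Lq \<Longrightarrow> r \<in> carrier R \<Longrightarrow> smult (quot_mod M D) r A \<in> Lq"
      using h unfolding submod_def quot_simps by auto
    define L where "L = {m \<in> carrier M. mcoset M D m \<in> Lq}"
    have Ls: "submod R M L" unfolding submod_def
    proof (intro conjI ballI)
      show "L \<subseteq> carrier M" unfolding L_def by blast
      show "\<zero>\<^bsub>M\<^esub> \<in> L" unfolding L_def using coset_zero[OF Ds] lq(1) by simp
    next
      fix x y assume "x \<in> L" "y \<in> L"
      hence "x \<in> carrier M" "y \<in> carrier M" "mcoset M D x \<in> Lq" "mcoset M D y \<in> Lq" unfolding L_def by auto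
      thus "x \<oplus>\<^bsub>M\<^esub> y \<in> L" unfolding L_def using coset_add[OF Ds, of x y] lq(2) by fastforce
    next
      fix x assume "x \<in> L"
      hence "x \<in> carrier M" "mcoset M D x \<in> Lq" unfolding L_def by auto
      thus "\<ominus>\<^bsub>M\<^esub> x \<in> L" unfolding L_def using coset_inv[OF Ds, of x] lq(3) by fastforce
    next
      fix x r assume "x \<in> L" "r \<in> carrier R"
      hence "x \<in> carrier M" "mcoset M D x \<in> Lq" unfolding L_def by auto
      thus "smult M r x \<in> L" unfolding L_def using coset_smult[OF Ds, of x r] lq(4) sm_closed \<open>r \<in> carrier R\<close> by fastforce
    qed
    have "msum M (D' \<inter> X) L = carrier M"
    proof
      show "msum M (D' \<inter> X) L \<subseteq> carrier M" using msum_sub[OF submod_Int[OF D's Xs] Ls] .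
      show "carrier M \<subseteq> msum M (D' \<inter> X) L"
      proof
        fix m assume m: "m \<in> carrier M"
        hence "mcoset M D m \<in> msum (quot_mod M D) (quot_sub M D (msum M X D)) Lq" using h by (simp add: quot_simps)
        then obtain x C where xC: "x \<in> X" "C \<in> Lq" "mcoset M D m = msum M (mcoset M D x) C"
          unfolding quot_msum XD quot_sub_def by blast
        then obtain l where l: "l \<in> carrier M" "C = mcoset M D l" using h by (auto simp: quot_simps)
        have xc: "x \<in> carrier M" using xC dc by auto
        have lL: "l \<in> L" unfolding L_def using l xC by simp
        have "mcoset M D m = mcoset M D (x \<oplus>\<^bsub>M\<^esub> l)" using xC l coset_add[OF Ds xc l(1)] by simp
        hence e: "m \<ominus>\<^bsub>M\<^esub> (x \<oplus>\<^bsub>M\<^esub> l) \<in> D" using coset_eq[OF Ds m] xc l by simp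
        obtain dx k where dk: "dx \<in> D" "k \<in> D'" "x = dx \<oplus>\<^bsub>M\<^esub> k" using decomp_split[OF dec xc] by blast
        have cc: "dx \<in> carrier M" "k \<in> carrier M" using dk dc by auto
        define e0 where "e0 = m \<ominus>\<^bsub>M\<^esub> (x \<oplus>\<^bsub>M\<^esub> l)"
        have e0c: "e0 \<in> carrier M" unfolding e0_def using m xc l by simp
        have "m = e0 \<oplus>\<^bsub>M\<^esub> (x \<oplus>\<^bsub>M\<^esub> l)" unfolding e0_def using G4[OF m] xc l by simp
        also have "\<dots> = k \<oplus>\<^bsub>M\<^esub> ((e0 \<oplus>\<^bsub>M\<^esub> dx) \<oplus>\<^bsub>M\<^esub> l)" using dk(3) cc e0c l by (simp add: a_ac)
        finally have mk: "m = k \<oplus>\<^bsub>M\<^esub> ((e0 \<oplus>\<^bsub>M\<^esub> dx) \<oplus>\<^bsub>M\<^esub> l)" .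
        have ed: "e0 \<oplus>\<^bsub>M\<^esub> dx \<in> D" using e dk submodD(3)[OF Ds] unfolding e0_def by blast
        have edc: "e0 \<oplus>\<^bsub>M\<^esub> dx \<in> carrier M" using e0c cc by simp
        have "mcoset M D ((e0 \<oplus>\<^bsub>M\<^esub> dx) \<oplus>\<^bsub>M\<^esub> l) = mcoset M D l"
          using coset_eq[OF Ds _ l(1)] G3[OF edc l(1)] ed edc l by simp
        hence l'L: "(e0 \<oplus>\<^bsub>M\<^esub> dx) \<oplus>\<^bsub>M\<^esub> l \<in> L" using lL edc l unfolding L_def by simp
        have "k = x \<ominus>\<^bsub>M\<^esub> dx" using dk(3) cc G3[OF cc(2) cc(1)] by (simp add: a_comm)
        hence "k \<in> X" using submod_minus[OF Xs] xC dk DX by blast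
        thus "m \<in> msum M (D' \<inter> X) L" unfolding msum_def using mk l'L dk by blast
      qed
    qed
    hence LM: "L = carrier M" using sm Ls unfolding small_in_def L_def by blast
    show "Lq = carrier (quot_mod M D)"
    proof
      show "Lq \<subseteq> carrier (quot_mod M D)" using h by blast
      show "carrier (quot_mod M D) \<subseteq> Lq" using LM unfolding L_def by (auto simp: quot_simps)
    qed
  qed
  have "direct_summand R M D" unfolding direct_summand_def using dec by blast
  thus "\<exists>D. direct_summand R M D \<and> beta_star R M X D" using p1 p2 unfolding beta_star_def by blast
qed

end


theorem proposition3p16:
  fixes R :: "('r, 'm) ring_scheme" and M :: "('r, 'a) module"
  assumes "right_module R M" and "pi_projective R M"
  shows "(principally_lifting R M \<longleftrightarrow> principally_goldie_star_lifting R M) \<and>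
         (principally_goldie_star_lifting R M \<longleftrightarrow> oplus_principally_supplemented R M)"
proof -
  interpret rmod R M by (rule rmod.intro) (rule assms(1))
  show ?thesis using a_to_b b_to_c c_to_a[OF assms(2)] by blast
qed

end
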